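(* Let $X,Y$ be countable discrete metric spaces, $d\in D(X,Y)$, $d'\in D(Y,X)$ with $M_{d\circ d'}(Y,Y)=M_{d^0}(Y,Y)$ and $M_{d'\circ d}(X,X)=M_{d^0}(X,X)$. Then $X$ and $Y$ are almost isometric: there exist almost isometries $f:X\to Y$, $g:Y\to X$ and $C>0$ with $d_X(g(f(x)),x)<C$ and $d_Y(f(g(y)),y)<C$ for all $x\in X$, $y\in Y$.
   Context: $D(X,Y)$: metrics on $X\sqcup Y$ extending $d_X,d_Y$. Composites: $(d'\circ d)(x_1,x_2')=\inf_{y\in Y}(d(x_1,y)+d'(y,x_2'))$ on $X\sqcup X'$ ($X'$ a copy of $X$), similarly $(d\circ d')(y_1,y_2')=\inf_{x\in X}(d'(y_1,x)+d(x,y_2'))$. For such a function $\rho$ on $X\sqcup X'$, $M_\rho(X,X)$ is the norm closure of bounded operators $T$ on $l^2(X)$ for which there is $L$ with $\langle T\delta_{x_1},\delta_{x_2}\rangle=0$ whenever $\rho(x_1,x_2')\ge L$. $d^0(x_1,x_2')=d_X(x_1,x_2)+1$, so $M_{d^0}(X,X)=C^*_u(X)$. An almost isometry $f:X\to Y$ satisfies $d_X(x,x')-C\le d_Y(f(x),f(x'))\le d_X(x,x')+C$ for some $C>0$. *)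

theory Defs
  imports "HOL-Analysis.Analysis"
begin

definition metric_fun :: "('c \<Rightarrow> 'c \<Rightarrow> real) \<Rightarrow> bool" where
  "metric_fun d \<longleftrightarrow> (\<forall>x y. d x y = 0 \<longleftrightarrow> x = y) \<and> (\<forall>x y. d x y = d y x)
     \<and> (\<forall>x y z. d x z \<le> d x y + d y z)"

definition D_metrics :: "('a::metric_space + 'b::metric_space \<Rightarrow> 'a + 'b \<Rightarrow> real) set" where
  "D_metrics = {d. metric_fun d \<and> (\<forall>x x'. d (Inl x) (Inl x') = dist x x')
                  \<and> (\<forall>y y'. d (Inr y) (Inr y') = dist y y')}"

text \<open>Composite: for e on P+Q and e' on Q+P, the function on P (x) P' given by
  (e' o e)(p1,p2') = inf_q (e(p1,q) + e'(q,p2')).\<close>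
definition comp_metric :: "('p + 'q \<Rightarrow> 'p + 'q \<Rightarrow> real) \<Rightarrow> ('q + 'p \<Rightarrow> 'q + 'p \<Rightarrow> real)
    \<Rightarrow> 'p \<Rightarrow> 'p \<Rightarrow> real" where
  "comp_metric e e' p1 p2 = Inf {e (Inl p1) (Inr q) + e' (Inl q) (Inr p2) | q. True}"

definition d0 :: "'a::metric_space \<Rightarrow> 'a \<Rightarrow> real" where
  "d0 x1 x2 = dist x1 x2 + 1"

text \<open>A bounded operator T on l^2(X) is encoded by its matrix
  m i j = <T delta_j, delta_i>; T is determined by its action on finitely supported vectors.\<close>

definition finsupp :: "('a \<Rightarrow> complex) \<Rightarrow> bool" where
  "finsupp v \<longleftrightarrow> finite {x. v x \<noteq> 0}"

definition mat_apply :: "('a \<Rightarrow> 'a \<Rightarrow> complex) \<Rightarrow> ('a \<Rightarrow> complex) \<Rightarrow> 'a \<Rightarrow> complex" where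
  "mat_apply m v i = (\<Sum>j\<in>{x. v x \<noteq> 0}. m i j * v j)"

definition l2_summable :: "('a \<Rightarrow> complex) \<Rightarrow> bool" where
  "l2_summable w \<longleftrightarrow> (\<lambda>x. (cmod (w x))^2) summable_on UNIV"

definition l2_sq :: "('a \<Rightarrow> complex) \<Rightarrow> real" where
  "l2_sq w = (\<Sum>\<^sub>\<infinity>x. (cmod (w x))^2)"

definition bounded_mat :: "('a \<Rightarrow> 'a \<Rightarrow> complex) \<Rightarrow> bool" where
  "bounded_mat m \<longleftrightarrow> (\<exists>B. \<forall>v. finsupp v \<longrightarrow>
      l2_summable (mat_apply m v) \<and> l2_sq (mat_apply m v) \<le> B^2 * l2_sq v)"

definition op_norm :: "('a \<Rightarrow> 'a \<Rightarrow> complex) \<Rightarrow> real" where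
  "op_norm m = Inf {B. 0 \<le> B \<and> (\<forall>v. finsupp v \<longrightarrow> l2_sq (mat_apply m v) \<le> B^2 * l2_sq v)}"

definition finite_prop :: "('a \<Rightarrow> 'a \<Rightarrow> real) \<Rightarrow> ('a \<Rightarrow> 'a \<Rightarrow> complex) \<Rightarrow> bool" where
  "finite_prop rho m \<longleftrightarrow> (\<exists>L. \<forall>x1 x2. rho x1 x2 \<ge> L \<longrightarrow> m x2 x1 = 0)"

text \<open>M_rho(X,X): norm closure of the bounded operators of finite rho-propagation.\<close>
definition M_alg :: "('a \<Rightarrow> 'a \<Rightarrow> real) \<Rightarrow> ('a \<Rightarrow> 'a \<Rightarrow> complex) set" where
  "M_alg rho = {m. bounded_mat m \<and> (\<forall>\<epsilon>>0. \<exists>s. bounded_mat s \<and> finite_prop rho s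
                   \<and> op_norm (\<lambda>i j. m i j - s i j) < \<epsilon>)}"

definition almost_isometry :: "('a::metric_space \<Rightarrow> 'b::metric_space) \<Rightarrow> bool" where
  "almost_isometry f \<longleftrightarrow> (\<exists>C>0. \<forall>x x'. dist x x' - C \<le> dist (f x) (f x')
                                         \<and> dist (f x) (f x') \<le> dist x x' + C)"

end

theory Submission
  imports Defs
begin

definition idm :: "'a \<Rightarrow> 'a \<Rightarrow> complex" where
  "idm i j = (if i = j then 1 else 0)"

lemma l2_fin:
  assumes "finsupp v" shows "(\<lambda>x. (cmod (v x))^2) summable_on UNIV"
proof -
  have "(\<lambda>x. (cmod (v x))^2) summable_on {x. v x \<noteq> 0}" using assms by (simp add: finsupp_def)
  then show ?thesis
    using summable_on_cong_neutral[where S=UNIV and T="{x. v x \<noteq> 0}"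
        and f="\<lambda>x. (cmod (v x))^2" and g="\<lambda>x. (cmod (v x))^2"] by auto
qed

lemma l2_sq_nonneg: "l2_sq v \<ge> 0"
  unfolding l2_sq_def by (rule infsum_nonneg) auto

lemma mat_apply_id:
  assumes "finsupp v" shows "mat_apply idm v = v"
proof
  fix i
  have fin: "finite {x. v x \<noteq> 0}" using assms by (simp add: finsupp_def)
  have "mat_apply idm v i = (\<Sum>j\<in>{x. v x \<noteq> 0}. if j = i then v i else 0)"
    unfolding mat_apply_def idm_def by (rule sum.cong) auto
  also have "\<dots> = v i" using fin by (simp add: sum.delta)
  finally show "mat_apply idm v i = v i" .
qed

lemma mat_apply_diff:
  assumes "finsupp v"
  shows "mat_apply (\<lambda>i j. idm i j - s i j) v = (\<lambda>k. v k - mat_apply s v k)"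
proof
  fix k
  have "mat_apply (\<lambda>i j. idm i j - s i j) v k = mat_apply idm v k - mat_apply s v k"
    unfolding mat_apply_def by (simp add: left_diff_distrib sum_subtractf)
  then show "mat_apply (\<lambda>i j. idm i j - s i j) v k = v k - mat_apply s v k"
    using mat_apply_id[OF assms] by simp
qed

lemma op_norm_zero: "op_norm (\<lambda>i j. 0::complex) = 0"
proof -
  have "mat_apply (\<lambda>i j. 0::complex) v = (\<lambda>_. 0)" for v :: "'a \<Rightarrow> complex"
    by (rule ext) (simp add: mat_apply_def)
  moreover have "l2_sq (\<lambda>_::'a. 0::complex) = 0" by (simp add: l2_sq_def)
  ultimately have "{B. 0 \<le> B \<and> (\<forall>v::'a \<Rightarrow> complex. finsupp v \<longrightarrow> l2_sq (mat_apply (\<lambda>i j. 0::complex) v) \<le> B^2 * l2_sq v)}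
      = {0..}" using l2_sq_nonneg by (auto intro!: mult_nonneg_nonneg)
  then show ?thesis unfolding op_norm_def by simp
qed

lemma id_in_M: "idm \<in> M_alg (d0 :: 'a::metric_space \<Rightarrow> 'a \<Rightarrow> real)"
proof -
  have b: "bounded_mat (idm :: 'a \<Rightarrow> 'a \<Rightarrow> complex)"
    unfolding bounded_mat_def
  proof (intro exI[of _ 1] allI impI conjI)
    fix v :: "'a \<Rightarrow> complex" assume fv: "finsupp v"
    then show "l2_summable (mat_apply idm v)" by (simp add: mat_apply_id l2_summable_def l2_fin)
    show "l2_sq (mat_apply idm v) \<le> 1^2 * l2_sq v" using fv by (simp add: mat_apply_id)
  qed
  have fp: "finite_prop (d0 :: 'a \<Rightarrow> 'a \<Rightarrow> real) idm"
    unfolding finite_prop_def d0_def idm_def by (rule exI[of _ 2]) auto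
  show ?thesis unfolding M_alg_def
  proof (intro CollectI conjI allI impI b)
    fix \<epsilon>::real assume "\<epsilon> > 0"
    then show "\<exists>s. bounded_mat s \<and> finite_prop (d0::'a \<Rightarrow> 'a \<Rightarrow> real) s \<and> op_norm (\<lambda>i j. idm i j - s i j) < \<epsilon>"
    proof (intro exI[of _ idm] conjI b fp)
      have "(\<lambda>(i::'a) (j::'a). idm i j - idm i j) = (\<lambda>i j. 0::complex)" by simp
      then have "op_norm (\<lambda>(i::'a) (j::'a). idm i j - idm i j) = 0" using op_norm_zero by metis
      then show "op_norm (\<lambda>(i::'a) (j::'a). idm i j - idm i j) < \<epsilon>" using \<open>\<epsilon> > 0\<close> by simp
    qed
  qed
qed

lemma sq_diff_le: "(cmod (a - b))^2 \<le> 2 * (cmod a)^2 + 2 * (cmod b)^2"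
proof -
  have t: "cmod (a - b) \<le> cmod a + cmod b" by (rule norm_triangle_ineq4)
  have n: "0 \<le> cmod (a - b)" by simp
  have "(cmod (a - b))^2 \<le> (cmod a + cmod b)^2"
    using power_mono[OF t n, of 2] .
  moreover have "(cmod a + cmod b)^2 \<le> 2 * (cmod a)^2 + 2 * (cmod b)^2"
  proof -
    have "0 \<le> (cmod a - cmod b)^2" by simp
    then show ?thesis by (simp add: power2_eq_square algebra_simps)
  qed
  ultimately show ?thesis by linarith
qed

lemma diag:
  fixes s :: "'a \<Rightarrow> 'a \<Rightarrow> complex"
  assumes bs: "bounded_mat s" and on: "op_norm (\<lambda>i j. idm i j - s i j) < 1"
  shows "s i i \<noteq> 0"
proof
  assume sii: "s i i = 0"
  let ?m = "\<lambda>i j. idm i j - s i j"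
  obtain B where B: "\<And>v. finsupp v \<Longrightarrow> l2_summable (mat_apply s v) \<and> l2_sq (mat_apply s v) \<le> B^2 * l2_sq v"
    using bs unfolding bounded_mat_def by blast
  have summ: "(\<lambda>x. (cmod (mat_apply ?m v x))^2) summable_on UNIV"
    and le: "l2_sq (mat_apply ?m v) \<le> (2 + 2 * B^2) * l2_sq v" if fv: "finsupp v" for v
  proof -
    have s1: "(\<lambda>x. (cmod (v x))^2) summable_on UNIV" using l2_fin[OF fv] .
    have s2: "(\<lambda>x. (cmod (mat_apply s v x))^2) summable_on UNIV"
      using B[OF fv] unfolding l2_summable_def by blast
    have s3: "(\<lambda>x. 2 * (cmod (v x))^2 + 2 * (cmod (mat_apply s v x))^2) summable_on UNIV"
      by (intro summable_on_add summable_on_cmult_right s1 s2)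
    have pw: "(cmod (mat_apply ?m v x))^2 \<le> 2 * (cmod (v x))^2 + 2 * (cmod (mat_apply s v x))^2" for x
      using mat_apply_diff[OF fv, of s] sq_diff_le by simp
    show sm: "(\<lambda>x. (cmod (mat_apply ?m v x))^2) summable_on UNIV"
      by (rule summable_on_comparison_test[OF s3]) (use pw in auto)
    have "l2_sq (mat_apply ?m v) \<le> (\<Sum>\<^sub>\<infinity>x. 2 * (cmod (v x))^2 + 2 * (cmod (mat_apply s v x))^2)"
      unfolding l2_sq_def by (rule infsum_mono[OF sm s3]) (use pw in auto)
    also have "\<dots> = 2 * l2_sq v + 2 * l2_sq (mat_apply s v)"
      unfolding l2_sq_def
      by (simp add: infsum_add summable_on_cmult_right s1 s2 infsum_cmult_right)
    also have "\<dots> \<le> 2 * l2_sq v + 2 * (B^2 * l2_sq v)" using B[OF fv] by simp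
    also have "\<dots> = (2 + 2 * B^2) * l2_sq v" by (simp add: algebra_simps)
    finally show "l2_sq (mat_apply ?m v) \<le> (2 + 2 * B^2) * l2_sq v" .
  qed
  define S where "S = {B. 0 \<le> B \<and> (\<forall>v. finsupp v \<longrightarrow> l2_sq (mat_apply ?m v) \<le> B^2 * l2_sq v)}"
  have "sqrt (2 + 2 * B^2) \<in> S" unfolding S_def using le by auto
  then have ne: "S \<noteq> {}" by blast
  have ge1: "1 \<le> b" if "b \<in> S" for b
  proof -
    define v :: "'a \<Rightarrow> complex" where "v = (\<lambda>k. if k = i then 1 else 0)"
    have fv: "finsupp v" unfolding finsupp_def v_def by simp
    have lv: "l2_sq v = 1"
    proof -
      have "l2_sq v = (\<Sum>\<^sub>\<infinity>x\<in>{i}. (cmod (v x))^2)"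
        unfolding l2_sq_def by (rule infsum_cong_neutral) (auto simp: v_def)
      then show ?thesis by (simp add: v_def)
    qed
    have mv: "mat_apply ?m v i = 1"
    proof -
      have "mat_apply s v i = (\<Sum>j\<in>{i}. s i j * v j)"
        unfolding mat_apply_def v_def by (rule sum.cong) auto
      then show ?thesis using mat_apply_diff[OF fv, of s] sii by (simp add: v_def)
    qed
    have "(\<Sum>x\<in>{i}. (cmod (mat_apply ?m v x))^2) \<le> l2_sq (mat_apply ?m v)"
      unfolding l2_sq_def by (rule finite_sum_le_infsum[OF summ[OF fv]]) auto
    then have "1 \<le> l2_sq (mat_apply ?m v)" using mv by simp
    also have "\<dots> \<le> b^2 * l2_sq v" using that fv unfolding S_def by blast
    finally have "1 \<le> b^2" using lv by simp
    moreover have "0 \<le> b" using that unfolding S_def by blast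
    ultimately show ?thesis using real_sqrt_le_mono[OF \<open>1 \<le> b^2\<close>] by simp
  qed
  have "1 \<le> Inf S" by (rule cInf_greatest[OF ne ge1])
  then show False using on unfolding op_norm_def S_def by simp
qed

lemma metric_nonneg: assumes "metric_fun d" shows "d x y \<ge> 0"
proof -
  have "d x x = 0" "d x x \<le> d x y + d y x" "d x y = d y x"
    using assms unfolding metric_fun_def by blast+
  then show ?thesis by linarith
qed

lemma diag_bound:
  fixes rho :: "'a \<Rightarrow> 'a \<Rightarrow> real"
  assumes "idm \<in> M_alg rho" shows "\<exists>L. \<forall>p. rho p p < L"
proof -
  obtain s where s: "bounded_mat s" "finite_prop rho s" "op_norm (\<lambda>i j. idm i j - s i j) < 1"
  proof -
    have "\<forall>\<epsilon>>0. \<exists>s. bounded_mat s \<and> finite_prop rho s \<and> op_norm (\<lambda>i j. idm i j - s i j) < \<epsilon>"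
      using assms unfolding M_alg_def by blast
    then have "\<exists>s. bounded_mat s \<and> finite_prop rho s \<and> op_norm (\<lambda>i j. idm i j - s i j) < 1"
      by simp
    then show ?thesis using that by blast
  qed
  obtain L where L: "\<And>x1 x2. rho x1 x2 \<ge> L \<Longrightarrow> s x2 x1 = 0"
    using s(2) unfolding finite_prop_def by blast
  have "rho p p < L" for p
    using L[of p p] diag[OF s(1) s(3), of p] by linarith
  then show ?thesis by blast
qed

lemma comp_small:
  assumes "\<forall>a b. e a b \<ge> 0" "\<forall>a b. e' a b \<ge> 0" "comp_metric e e' p p < L"
  shows "\<exists>q. e (Inl p) (Inr q) < L \<and> e' (Inl q) (Inr p) < L"
proof -
  let ?X = "{e (Inl p) (Inr q) + e' (Inl q) (Inr p) | q. True}"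
  have ne: "?X \<noteq> {}" by blast
  have "Inf ?X < L" using assms(3) unfolding comp_metric_def .
  from cInf_lessD[OF ne this] obtain z where "z \<in> ?X" "z < L" by blast
  then obtain q where "e (Inl p) (Inr q) + e' (Inl q) (Inr p) < L" by blast
  moreover have "e (Inl p) (Inr q) \<ge> 0" "e' (Inl q) (Inr p) \<ge> 0" using assms(1,2) by auto
  ultimately show ?thesis by (intro exI[of _ q]) linarith
qed

theorem corollary4p3:
  fixes d :: "'a::metric_space + 'b::metric_space \<Rightarrow> 'a + 'b \<Rightarrow> real"
    and d' :: "'b + 'a \<Rightarrow> 'b + 'a \<Rightarrow> real"
  assumes "countable (UNIV :: 'a set)" and "countable (UNIV :: 'b set)"
    and "\<forall>x::'a. open {x}" and "\<forall>y::'b. open {y}"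
    and "d \<in> D_metrics" and "d' \<in> D_metrics"
    and "M_alg (comp_metric d' d) = M_alg (d0 :: 'b \<Rightarrow> 'b \<Rightarrow> real)"
    and "M_alg (comp_metric d d') = M_alg (d0 :: 'a \<Rightarrow> 'a \<Rightarrow> real)"
  shows "\<exists>(f::'a \<Rightarrow> 'b) (g::'b \<Rightarrow> 'a) C. almost_isometry f \<and> almost_isometry g \<and> C > 0
           \<and> (\<forall>x. dist (g (f x)) x < C) \<and> (\<forall>y. dist (f (g y)) y < C)"
proof -
  have md: "metric_fun d" and dl: "\<And>x x'. d (Inl x) (Inl x') = dist x x'"
    and dr: "\<And>y y'. d (Inr y) (Inr y') = dist y y'"
    using assms(5) unfolding D_metrics_def by auto
  have md': "metric_fun d'" using assms(6) unfolding D_metrics_def by auto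
  have tri: "\<And>a b c. d a c \<le> d a b + d b c" and sym: "\<And>a b. d a b = d b a"
    using md unfolding metric_fun_def by auto
  have nn: "\<forall>a b. d a b \<ge> 0" using metric_nonneg[OF md] by blast
  have nn': "\<forall>a b. d' a b \<ge> 0" using metric_nonneg[OF md'] by blast
  obtain L1 where L1: "\<forall>y. comp_metric d' d y y < L1"
  proof -
    have "idm \<in> M_alg (comp_metric d' d)" using id_in_M assms(7) by simp
    then show ?thesis using that diag_bound by blast
  qed
  obtain L2 where L2: "\<forall>x. comp_metric d d' x x < L2"
  proof -
    have "idm \<in> M_alg (comp_metric d d')" using id_in_M assms(8) by simp
    then show ?thesis using that diag_bound by blast
  qed
  have g0: "\<forall>y. \<exists>x. d (Inl x) (Inr y) < L1"
    using comp_small[OF nn' nn] L1 by blast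
  have f0: "\<forall>x. \<exists>y. d (Inl x) (Inr y) < L2"
    using comp_small[OF nn nn'] L2 by blast
  define f where "f x = (SOME y. d (Inl x) (Inr y) < L2)" for x
  define g where "g y = (SOME x. d (Inl x) (Inr y) < L1)" for y
  define L where "L = max L1 L2"
  have hf: "d (Inl x) (Inr (f x)) < L" for x
    unfolding f_def L_def using someI_ex[OF f0[rule_format, of x]] by linarith
  have hg: "d (Inl (g y)) (Inr y) < L" for y
    unfolding g_def L_def using someI_ex[OF g0[rule_format, of y]] by linarith
  have "0 \<le> d (Inl undefined) (Inr (f undefined))" using nn by blast
  then have Lpos: "L > 0" using hf[of undefined] by linarith
  have aif: "almost_isometry f" unfolding almost_isometry_def
  proof (intro exI[of _ "2*L+1"] conjI allI)
    fix x x'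
    have a: "d (Inr (f x)) (Inr (f x')) \<le> d (Inr (f x)) (Inl x) + d (Inl x) (Inr (f x'))" by (rule tri)
    have b: "d (Inl x) (Inr (f x')) \<le> d (Inl x) (Inl x') + d (Inl x') (Inr (f x'))" by (rule tri)
    have c: "d (Inl x) (Inl x') \<le> d (Inl x) (Inr (f x)) + d (Inr (f x)) (Inl x')" by (rule tri)
    have e: "d (Inr (f x)) (Inl x') \<le> d (Inr (f x)) (Inr (f x')) + d (Inr (f x')) (Inl x')" by (rule tri)
    show "0 < 2*L+1" using Lpos by simp
    show "dist x x' - (2*L+1) \<le> dist (f x) (f x')"
      using a b c e hf[of x] hf[of x'] sym[of "Inr (f x)" "Inl x"] sym[of "Inr (f x')" "Inl x'"]
        dl[of x x'] dr[of "f x" "f x'"] by linarith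
    show "dist (f x) (f x') \<le> dist x x' + (2*L+1)"
      using a b c e hf[of x] hf[of x'] sym[of "Inr (f x)" "Inl x"] sym[of "Inr (f x')" "Inl x'"]
        dl[of x x'] dr[of "f x" "f x'"] by linarith
  qed
  have aig: "almost_isometry g" unfolding almost_isometry_def
  proof (intro exI[of _ "2*L+1"] conjI allI)
    fix y y'
    have a: "d (Inl (g y)) (Inl (g y')) \<le> d (Inl (g y)) (Inr y) + d (Inr y) (Inl (g y'))" by (rule tri)
    have b: "d (Inr y) (Inl (g y')) \<le> d (Inr y) (Inr y') + d (Inr y') (Inl (g y'))" by (rule tri)
    have c: "d (Inr y) (Inr y') \<le> d (Inr y) (Inl (g y)) + d (Inl (g y)) (Inr y')" by (rule tri)
    have e: "d (Inl (g y)) (Inr y') \<le> d (Inl (g y)) (Inl (g y')) + d (Inl (g y')) (Inr y')" by (rule tri)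
    show "0 < 2*L+1" using Lpos by simp
    show "dist y y' - (2*L+1) \<le> dist (g y) (g y')"
      using a b c e hg[of y] hg[of y'] sym[of "Inr y" "Inl (g y)"] sym[of "Inr y'" "Inl (g y')"]
        dr[of y y'] dl[of "g y" "g y'"] by linarith
    show "dist (g y) (g y') \<le> dist y y' + (2*L+1)"
      using a b c e hg[of y] hg[of y'] sym[of "Inr y" "Inl (g y)"] sym[of "Inr y'" "Inl (g y')"]
        dr[of y y'] dl[of "g y" "g y'"] by linarith
  qed
  have gf: "dist (g (f x)) x < 2*L+1" for x
  proof -
    have "d (Inl (g (f x))) (Inl x) \<le> d (Inl (g (f x))) (Inr (f x)) + d (Inr (f x)) (Inl x)" by (rule tri)
    then show ?thesis using hg[of "f x"] hf[of x] sym[of "Inr (f x)" "Inl x"] dl[of "g (f x)" x] by linarith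
  qed
  have fg: "dist (f (g y)) y < 2*L+1" for y
  proof -
    have "d (Inr (f (g y))) (Inr y) \<le> d (Inr (f (g y))) (Inl (g y)) + d (Inl (g y)) (Inr y)" by (rule tri)
    then show ?thesis using hg[of y] hf[of "g y"] sym[of "Inr (f (g y))" "Inl (g y)"] dr[of "f (g y)" y] by linarith
  qed
  show ?thesis using aif aig gf fg Lpos by (intro exI[of _ f] exI[of _ g] exI[of _ "2*L+1"]) simp
qed

end
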